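(* Let $(\mathbb{X},\mathcal{A},\pi)$ be a probability space and let $T$ be a transition kernel on $\mathbb{X}$ (i.e. $T\colon \mathbb{X}\times\mathcal{A}\to[0,1]$ with $A\mapsto T(x,A)$ a probability measure for every $x\in\mathbb{X}$ and $x\mapsto T(x,A)$ measurable for every $A\in\mathcal{A}$) which preserves $\pi$, i.e. $\pi T=\pi$. Let $1\le p\le q$. Suppose that for all $f\in L^p(\pi)$, $$\|Tf\|_q\le \|f\|_p.$$ Then for every probability measure $\mu$ on $(\mathbb{X},\mathcal{A})$, $$\mathrm{H}(\mu T\,|\,\pi)\le \frac{p}{q}\,\mathrm{H}(\mu\,|\,\pi).$$
   Context: For a probability measure $\mu$ on $(\mathbb{X},\mathcal{A})$, $\mu T$ is the probability measure $(\mu T)(A)=\int_{\mathbb{X}} T(x,A)\,\mu(\mathrm{d}x)$. For a measurable function $f$, $Tf(x)=\int_{\mathbb{X}} f(y)\,T(x,\mathrm{d}y)$ (for signed $f$, by linearity whenever $Tf_+$ or $Tf_-$ is finite). $\|f\|_r=\left(\int |f|^r\,\mathrm{d}\pi\right)^{1/r}$. $\mathrm{H}(\mu\,|\,\pi)$ is the Kullback–Leibler divergence: $\mathrm{H}(\mu\,|\,\pi)=\int \log\left(\frac{\mathrm{d}\mu}{\mathrm{d}\pi}\right)\mathrm{d}\mu$ if $\mu\ll\pi$, and $+\infty$ otherwise. No reversibility or regularity of $T$ is assumed. *)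

theory Defs
  imports "HOL-Probability.Probability"
begin

definition Lnorm :: "'a measure \<Rightarrow> real \<Rightarrow> ('a \<Rightarrow> real) \<Rightarrow> ennreal" where
  "Lnorm M r f =
     (let I = (\<integral>\<^sup>+ x. ennreal (\<bar>f x\<bar> powr r) \<partial>M)
      in if I = \<infinity> then \<infinity> else ennreal (enn2real I powr (1 / r)))"

definition kernel_fun :: "('a \<Rightarrow> 'a measure) \<Rightarrow> ('a \<Rightarrow> real) \<Rightarrow> 'a \<Rightarrow> real" where
  "kernel_fun T f x = (\<integral> y. f y \<partial>(T x))"

text \<open>If mu is absolutely continuous w.r.t. pi, with density rho, it is the integral of
  rho ln rho w.r.t. pi (positive part minus negative part; the negative part is bounded
  by 1/e); otherwise it is +infinity.\<close>
definition KL :: "'a measure \<Rightarrow> 'a measure \<Rightarrow> ereal" where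
  "KL \<mu> \<pi> =
     (if absolutely_continuous \<pi> \<mu> \<and> sets \<mu> = sets \<pi> then
        (let \<rho> = (\<lambda>x. enn2real (RN_deriv \<pi> \<mu> x));
             g = (\<lambda>x. \<rho> x * ln (\<rho> x))
         in enn2ereal (\<integral>\<^sup>+ x. ennreal (g x) \<partial>\<pi>) - enn2ereal (\<integral>\<^sup>+ x. ennreal (- g x) \<partial>\<pi>))
      else \<infinity>)"

end

theory Submission
  imports Defs
begin


lemma real_pt1:
  fixes u v w :: real
  assumes "u + v \<le> w" "0 \<le> v" "0 \<le> w"
  shows "ennreal u + ennreal v \<le> ennreal w + ennreal (- u)"
proof (cases "u \<ge> 0")
  case True
  then have "ennreal u + ennreal v = ennreal (u + v)" using assms by (simp add: ennreal_plus)
  also have "\<dots> \<le> ennreal w" using assms by (intro ennreal_leI) auto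
  finally show ?thesis by (meson add_increasing2 order_trans zero_le)
next
  case False
  then have "ennreal u = 0" by (simp add: ennreal_eq_0_iff)
  moreover have "ennreal v \<le> ennreal (w + - u)" using assms by (intro ennreal_leI) auto
  moreover have "ennreal (w + - u) = ennreal w + ennreal (- u)" using assms False by (intro ennreal_plus) auto
  ultimately show ?thesis by simp
qed

lemma real_pt2:
  fixes x1 x2 y1 y2 u :: real
  assumes "x1 + x2 \<le> u + y1 + y2" "0 \<le> x1" "0 \<le> x2" "0 \<le> y1" "0 \<le> y2"
  shows "ennreal x1 + ennreal (- u) + ennreal x2 \<le> ennreal u + ennreal y1 + ennreal y2"
proof (cases "u \<ge> 0")
  case True
  then have "ennreal x1 + ennreal (- u) + ennreal x2 = ennreal (x1 + x2)" using assms
    by (simp add: ennreal_plus ennreal_eq_0_iff)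
  also have "\<dots> \<le> ennreal (u + y1 + y2)" using assms by (intro ennreal_leI) auto
  also have "\<dots> = ennreal u + ennreal y1 + ennreal y2" using assms True by (simp add: ennreal_plus)
  finally show ?thesis .
next
  case False
  then have "ennreal x1 + ennreal (- u) + ennreal x2 = ennreal (x1 + (-u) + x2)" using assms
    by (simp only: ennreal_plus[symmetric])
  also have "\<dots> \<le> ennreal (y1 + y2)" using assms by (intro ennreal_leI) auto
  also have "\<dots> = ennreal u + ennreal y1 + ennreal y2" using assms False by (simp add: ennreal_plus ennreal_eq_0_iff)
  finally show ?thesis .
qed

lemma gibbs_pt:
  fixes r f :: real
  assumes "0 \<le> r"
  shows "r * f + r \<le> r * ln r + exp f"
proof (cases "r = 0")
  case True then show ?thesis by simp
next
  case False
  then have r: "r > 0" using assms by simp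
  have "f - ln r + 1 \<le> exp (f - ln r)" using exp_ge_add_one_self[of "f - ln r"] by linarith
  also have "exp (f - ln r) = exp f / r" using r by (simp add: exp_diff)
  finally have "r * (f - ln r + 1) \<le> r * (exp f / r)" using r by (intro mult_left_mono) auto
  then show ?thesis using r by (simp add: algebra_simps)
qed

lemma tangent_pt:
  fixes m y :: real
  assumes "0 < m" "0 < y"
  shows "ln y \<le> ln m + y / m - 1"
proof -
  have "ln (y / m) \<le> y / m - 1" using assms by (intro ln_le_minus_one) auto
  then show ?thesis using assms by (simp add: ln_div)
qed

lemma negxlnx_le1:
  fixes x :: real
  assumes "0 \<le> x"
  shows "- (x * ln x) \<le> 1"
proof (cases "x = 0")
  case False
  then have x: "x > 0" using assms by simp
  have "ln (1/x) \<le> 1/x - 1" using x by (intro ln_le_minus_one) auto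
  then have "- ln x \<le> 1/x - 1" using x by (simp add: ln_div)
  then have "x * (- ln x) \<le> x * (1/x - 1)" using x by (intro mult_left_mono) auto
  then show ?thesis using x by (simp add: algebra_simps)
qed simp



lemma dens_nn:
  assumes P: "prob_space \<pi>" and N: "prob_space \<nu>" and ac: "absolutely_continuous \<pi> \<nu>"
    and s: "sets \<nu> = sets \<pi>" and f: "f \<in> borel_measurable \<pi>"
  shows "(\<integral>\<^sup>+x. f x \<partial>\<nu>) = (\<integral>\<^sup>+x. ennreal (enn2real (RN_deriv \<pi> \<nu> x)) * f x \<partial>\<pi>)"
proof -
  interpret prob_space \<pi> by fact
  have eq: "density \<pi> (RN_deriv \<pi> \<nu>) = \<nu>" using density_RN_deriv[OF ac s] .
  have "(\<integral>\<^sup>+x. f x \<partial>\<nu>) = (\<integral>\<^sup>+x. RN_deriv \<pi> \<nu> x * f x \<partial>\<pi>)"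
    by (subst eq[symmetric]) (simp add: nn_integral_density f)
  also have "\<dots> = (\<integral>\<^sup>+x. ennreal (enn2real (RN_deriv \<pi> \<nu> x)) * f x \<partial>\<pi>)"
  proof (rule nn_integral_cong_AE)
    have "AE x in \<pi>. RN_deriv \<pi> \<nu> x \<noteq> \<infinity>"
      using RN_deriv_finite[OF prob_space_imp_sigma_finite[OF N] ac s] .
    then show "AE x in \<pi>. RN_deriv \<pi> \<nu> x * f x = ennreal (enn2real (RN_deriv \<pi> \<nu> x)) * f x"
      by eventually_elim (simp add: less_top)
  qed
  finally show ?thesis .
qed

lemma dens_one:
  assumes P: "prob_space \<pi>" and N: "prob_space \<nu>" and ac: "absolutely_continuous \<pi> \<nu>"
    and s: "sets \<nu> = sets \<pi>"
  shows "(\<integral>\<^sup>+x. ennreal (enn2real (RN_deriv \<pi> \<nu> x)) \<partial>\<pi>) = 1"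
  using dens_nn[OF P N ac s, of "\<lambda>_. 1"] prob_space.emeasure_space_1[OF N]
  by simp

lemma KL_eq:
  assumes "absolutely_continuous \<pi> \<mu>" "sets \<mu> = sets \<pi>"
  shows "KL \<mu> \<pi> = enn2ereal (\<integral>\<^sup>+ x. ennreal (enn2real (RN_deriv \<pi> \<mu> x) * ln (enn2real (RN_deriv \<pi> \<mu> x))) \<partial>\<pi>)
     - enn2ereal (\<integral>\<^sup>+ x. ennreal (- (enn2real (RN_deriv \<pi> \<mu> x) * ln (enn2real (RN_deriv \<pi> \<mu> x)))) \<partial>\<pi>)"
  using assms by (simp add: KL_def Let_def)

lemma neg_part_le1:
  assumes "prob_space \<pi>"
  shows "(\<integral>\<^sup>+ x. ennreal (- (enn2real (r x) * ln (enn2real (r x)))) \<partial>\<pi>) \<le> 1"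
proof -
  have "(\<integral>\<^sup>+ x. ennreal (- (enn2real (r x) * ln (enn2real (r x)))) \<partial>\<pi>) \<le> (\<integral>\<^sup>+ x. 1 \<partial>\<pi>)"
    by (intro nn_integral_mono) (use negxlnx_le1[OF enn2real_nonneg] in \<open>simp add: ennreal_le_1\<close>)
  also have "\<dots> = 1" using prob_space.emeasure_space_1[OF assms] by simp
  finally show ?thesis .
qed

lemma bind_ac:
  assumes P: "prob_space \<pi>" and T: "T \<in> \<pi> \<rightarrow>\<^sub>M prob_algebra \<pi>" and inv: "bind \<pi> T = \<pi>"
    and M: "prob_space \<mu>" and s: "sets \<mu> = sets \<pi>" and ac: "absolutely_continuous \<pi> \<mu>"
  shows "absolutely_continuous \<pi> (bind \<mu> T)" "sets (bind \<mu> T) = sets \<pi>" "prob_space (bind \<mu> T)"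
proof -
  have Ts: "T \<in> \<pi> \<rightarrow>\<^sub>M subprob_algebra \<pi>" using measurable_prob_algebraD[OF T] .
  have Tm: "T \<in> \<mu> \<rightarrow>\<^sub>M subprob_algebra \<pi>" using Ts measurable_cong_sets[OF s refl, of "subprob_algebra \<pi>"] by simp
  have Tp: "T \<in> \<mu> \<rightarrow>\<^sub>M prob_algebra \<pi>" using T measurable_cong_sets[OF s refl, of "prob_algebra \<pi>"] by simp
  have ne: "space \<mu> \<noteq> {}" using prob_space.not_empty[OF M] .
  have nep: "space \<pi> \<noteq> {}" using prob_space.not_empty[OF P] .
  have sTx: "\<And>x. x \<in> space \<mu> \<Longrightarrow> sets (T x) = sets \<pi>"
    using measurable_space[OF Tp] by (auto simp: space_prob_algebra)
  show ss: "sets (bind \<mu> T) = sets \<pi>" using sets_bind[OF sTx ne] .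
  show "prob_space (bind \<mu> T)"
    using measurable_space[OF Tp]
    by (intro prob_space.prob_space_bind[OF M _ Tm]) (auto simp: space_prob_algebra)
  show "absolutely_continuous \<pi> (bind \<mu> T)"
    unfolding absolutely_continuous_def
  proof
    fix A assume A: "A \<in> null_sets \<pi>"
    then have As: "A \<in> sets \<pi>" and A0: "emeasure \<pi> A = 0" by auto
    have meas: "(\<lambda>x. emeasure (T x) A) \<in> borel_measurable \<pi>"
      using measurable_compose[OF Ts measurable_emeasure_subprob_algebra[OF As]] .
    have "0 = emeasure (bind \<pi> T) A" using A0 inv by simp
    also have "\<dots> = (\<integral>\<^sup>+x. emeasure (T x) A \<partial>\<pi>)" using emeasure_bind[OF nep Ts As] .
    finally have "AE x in \<pi>. emeasure (T x) A = 0"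
      using nn_integral_0_iff_AE[OF meas] by simp
    then have ae: "AE x in \<mu>. emeasure (T x) A = 0"
      using absolutely_continuous_AE[OF s ac] by blast
    have "emeasure (bind \<mu> T) A = (\<integral>\<^sup>+x. emeasure (T x) A \<partial>\<mu>)" using emeasure_bind[OF ne Tm As] .
    also have "\<dots> = 0" using nn_integral_cong_AE[OF ae] by simp
    finally show "A \<in> null_sets (bind \<mu> T)" using As ss by auto
  qed
qed



lemma powr_le_1_plus:
  fixes z a :: real
  assumes "0 \<le> z" "0 \<le> a" "a \<le> 1"
  shows "z powr a \<le> 1 + z"
proof (cases "z \<le> 1")
  case True
  then have "z powr a \<le> 1 powr a" using assms by (intro powr_mono2) auto
  then show ?thesis using assms by simp
next
  case False
  then have "z powr a \<le> z powr 1" using assms by (intro powr_mono) auto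
  then show ?thesis using False by simp
qed

lemma core:
  fixes \<pi> :: "'a measure" and T :: "'a \<Rightarrow> 'a measure" and p q \<epsilon> :: real
  assumes P: "prob_space \<pi>"
    and T: "T \<in> \<pi> \<rightarrow>\<^sub>M prob_algebra \<pi>"
    and inv: "bind \<pi> T = \<pi>"
    and p1: "1 \<le> p" and pq: "p \<le> q"
    and hyp: "\<And>f. f \<in> borel_measurable \<pi> \<Longrightarrow> (\<integral>\<^sup>+ x. ennreal (\<bar>f x\<bar> powr p) \<partial>\<pi>) < \<infinity> \<Longrightarrow>
           Lnorm \<pi> q (kernel_fun T f) \<le> Lnorm \<pi> p f"
    and M: "prob_space \<mu>" and s: "sets \<mu> = sets \<pi>" and ac: "absolutely_continuous \<pi> \<mu>"
    and e0: "0 < \<epsilon>" and e1: "\<epsilon> \<le> 1"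
    and Afin: "(\<integral>\<^sup>+ x. ennreal (enn2real (RN_deriv \<pi> \<mu> x) * ln (enn2real (RN_deriv \<pi> \<mu> x))) \<partial>\<pi>) \<noteq> \<infinity>"
  shows "(\<integral>\<^sup>+ x. ennreal (enn2real (RN_deriv \<pi> (bind \<mu> T) x) * ln (enn2real (RN_deriv \<pi> (bind \<mu> T) x))) \<partial>\<pi>) \<noteq> \<infinity>
    \<and> enn2real (\<integral>\<^sup>+ x. ennreal (enn2real (RN_deriv \<pi> (bind \<mu> T) x) * ln (enn2real (RN_deriv \<pi> (bind \<mu> T) x))) \<partial>\<pi>)
      - enn2real (\<integral>\<^sup>+ x. ennreal (- (enn2real (RN_deriv \<pi> (bind \<mu> T) x) * ln (enn2real (RN_deriv \<pi> (bind \<mu> T) x)))) \<partial>\<pi>)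
     \<le> (p / q) * (enn2real (\<integral>\<^sup>+ x. ennreal (enn2real (RN_deriv \<pi> \<mu> x) * ln (enn2real (RN_deriv \<pi> \<mu> x))) \<partial>\<pi>)
        - enn2real (\<integral>\<^sup>+ x. ennreal (- (enn2real (RN_deriv \<pi> \<mu> x) * ln (enn2real (RN_deriv \<pi> \<mu> x)))) \<partial>\<pi>))
       + (p / q) * ((1 + \<epsilon>) powr (q / p) - 1)"
proof -
  interpret prob_space \<pi> by fact
  define \<nu> where "\<nu> = bind \<mu> T"
  define \<rho> where "\<rho> = (\<lambda>x. enn2real (RN_deriv \<pi> \<mu> x))"
  define \<sigma> where "\<sigma> = (\<lambda>x. enn2real (RN_deriv \<pi> \<nu> x))"
  define A where "A = (\<integral>\<^sup>+ x. ennreal (\<rho> x * ln (\<rho> x)) \<partial>\<pi>)"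
  define B where "B = (\<integral>\<^sup>+ x. ennreal (- (\<rho> x * ln (\<rho> x))) \<partial>\<pi>)"
  define A' where "A' = (\<integral>\<^sup>+ x. ennreal (\<sigma> x * ln (\<sigma> x)) \<partial>\<pi>)"
  define B' where "B' = (\<integral>\<^sup>+ x. ennreal (- (\<sigma> x * ln (\<sigma> x))) \<partial>\<pi>)"
  define g where "g = (\<lambda>x. (\<sigma> x + \<epsilon>) powr (1 / p))"
  define L where "L = (\<lambda>x. ln (\<sigma> x + \<epsilon>) - ln \<epsilon>)"
  define Tg where "Tg = kernel_fun T g"
  define G where "G = (\<lambda>x. \<integral>\<^sup>+ y. ennreal (g y) \<partial>T x)"
  define \<psi> where "\<psi> = (\<lambda>x. p * ln (Tg x) - ln \<epsilon>)"
  define \<phi> where "\<phi> = (\<lambda>x. q * ln (Tg x))"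
  define k where "k = - (q / p) * ln \<epsilon>"
  have p0: "p > 0" and q0: "q > 0" using p1 pq by auto
  have lne: "ln \<epsilon> \<le> 0" using e0 e1 by simp
  have k0: "k \<ge> 0" unfolding k_def using lne p0 q0 mult_nonneg_nonpos[of q "ln \<epsilon>"] by (simp add: divide_nonpos_pos)
  note bac = bind_ac[OF P T inv M s ac]
  have acn: "absolutely_continuous \<pi> \<nu>" and sn: "sets \<nu> = sets \<pi>" and N: "prob_space \<nu>"
    using bac unfolding \<nu>_def by auto
  have Ts: "T \<in> \<pi> \<rightarrow>\<^sub>M subprob_algebra \<pi>" using measurable_prob_algebraD[OF T] .
  have Tm: "T \<in> \<mu> \<rightarrow>\<^sub>M subprob_algebra \<pi>" using Ts measurable_cong_sets[OF s refl, of "subprob_algebra \<pi>"] by simp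
  have Tx: "prob_space (T x) \<and> sets (T x) = sets \<pi>" if "x \<in> space \<pi>" for x
    using measurable_space[OF T that] by (auto simp: space_prob_algebra)
  have sp: "space \<mu> = space \<pi>" using sets_eq_imp_space_eq[OF s] .
  have mu_meas: "f \<in> borel_measurable \<mu>" if "f \<in> borel_measurable \<pi>" for f :: "'a \<Rightarrow> ennreal"
    using that measurable_cong_sets[OF s refl, of "borel :: ennreal measure"] by simp
  have Tx_meas: "f \<in> borel_measurable (T x)" if "f \<in> borel_measurable \<pi>" "x \<in> space \<pi>" for f :: "'a \<Rightarrow> real" and x
    using that(1) measurable_cong_sets[OF conjunct2[OF Tx[OF that(2)]] refl, of "borel :: real measure"] by simp
  have Tx_meas': "f \<in> borel_measurable (T x)" if "f \<in> borel_measurable \<pi>" "x \<in> space \<pi>" for f :: "'a \<Rightarrow> ennreal" and x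
    using that(1) measurable_cong_sets[OF conjunct2[OF Tx[OF that(2)]] refl, of "borel :: ennreal measure"] by simp
  have \<rho>m[measurable]: "\<rho> \<in> borel_measurable \<pi>" unfolding \<rho>_def by measurable
  have \<sigma>m[measurable]: "\<sigma> \<in> borel_measurable \<pi>" unfolding \<sigma>_def by measurable
  have \<rho>0: "\<And>x. \<rho> x \<ge> 0" and \<sigma>0: "\<And>x. \<sigma> x \<ge> 0" unfolding \<rho>_def \<sigma>_def by auto
  have gm[measurable]: "g \<in> borel_measurable \<pi>" unfolding g_def by measurable
  have Lm[measurable]: "L \<in> borel_measurable \<pi>" unfolding L_def by measurable
  have Tgm[measurable]: "Tg \<in> borel_measurable \<pi>"
    unfolding Tg_def kernel_fun_def
    using measurable_compose[OF Ts integral_measurable_subprob_algebra[OF gm]] by simp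
  have Gm[measurable]: "G \<in> borel_measurable \<pi>"
    unfolding G_def
    using measurable_compose[OF Ts nn_integral_measurable_subprob_algebra[of "\<lambda>y. ennreal (g y)"]] by simp
  have \<psi>m[measurable]: "\<psi> \<in> borel_measurable \<pi>" unfolding \<psi>_def by measurable
  have \<phi>m[measurable]: "\<phi> \<in> borel_measurable \<pi>" unfolding \<phi>_def by measurable
  have g_pos: "g x \<ge> \<epsilon> powr (1/p)" for x
    unfolding g_def using e0 \<sigma>0[of x] p0 by (intro powr_mono2) auto
  have g0: "g x > 0" for x unfolding g_def using e0 \<sigma>0[of x] by simp
  have sig1: "(\<integral>\<^sup>+x. ennreal (\<sigma> x) \<partial>\<pi>) = 1" unfolding \<sigma>_def using dens_one[OF P N acn sn] .
  have rho1: "(\<integral>\<^sup>+x. ennreal (\<rho> x) \<partial>\<pi>) = 1" unfolding \<rho>_def using dens_one[OF P M ac s] .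
  have "(\<integral>\<^sup>+x. G x \<partial>\<pi>) = (\<integral>\<^sup>+x. ennreal (g x) \<partial>\<pi>)"
    unfolding G_def using nn_integral_bind[of "\<lambda>y. ennreal (g y)" \<pi> T \<pi>] Ts inv by simp
  also have "\<dots> \<le> (\<integral>\<^sup>+x. ennreal (2 + \<sigma> x) \<partial>\<pi>)"
  proof (intro nn_integral_mono ennreal_leI)
    fix x
    have "g x \<le> 1 + (\<sigma> x + \<epsilon>)" unfolding g_def using \<sigma>0[of x] e0 p1 by (intro powr_le_1_plus) auto
    then show "g x \<le> 2 + \<sigma> x" using e1 by simp
  qed
  also have "\<dots> = (\<integral>\<^sup>+x. 2 + ennreal (\<sigma> x) \<partial>\<pi>)"
    using \<sigma>0 by (intro nn_integral_cong) (simp add: ennreal_plus)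
  also have "\<dots> = 3" using sig1 by (subst nn_integral_add) (auto simp: emeasure_space_1)
  finally have le3: "(\<integral>\<^sup>+x. G x \<partial>\<pi>) \<le> 3" .
  have "(\<integral>\<^sup>+x. G x \<partial>\<pi>) \<noteq> \<infinity>" using neq_top_trans[OF _ le3] by simp
  then have aeG: "AE x in \<pi>. G x \<noteq> \<infinity>" using nn_integral_PInf_AE[OF Gm] by simp
  have aeGmu: "AE x in \<mu>. G x \<noteq> \<infinity>" using absolutely_continuous_AE[OF s ac aeG] .
  have TgG: "ennreal (Tg x) = G x \<and> \<epsilon> powr (1/p) \<le> Tg x"
    if x: "x \<in> space \<pi>" and Gx: "G x \<noteq> \<infinity>" for x
  proof -
    interpret Tx: prob_space "T x" using Tx[OF x] by simp
    have gTm: "g \<in> borel_measurable (T x)" using Tx_meas[OF gm x] .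
    have "Tg x = enn2real (G x)" unfolding Tg_def kernel_fun_def G_def
      using integral_eq_nn_integral[OF gTm] g0 by (simp add: less_imp_le)
    then have e: "ennreal (Tg x) = G x" using Gx by (simp add: less_top)
    have "ennreal (\<epsilon> powr (1/p)) = (\<integral>\<^sup>+y. ennreal (\<epsilon> powr (1/p)) \<partial>T x)"
      by (simp add: Tx.emeasure_space_1)
    also have "\<dots> \<le> G x" unfolding G_def using g_pos by (intro nn_integral_mono ennreal_leI) auto
    finally have "ennreal (\<epsilon> powr (1/p)) \<le> ennreal (Tg x)" using e by simp
    then have "\<epsilon> powr (1/p) \<le> Tg x" by (subst (asm) ennreal_le_iff) (auto simp: \<open>Tg x = enn2real (G x)\<close>)
    with e show ?thesis by simp
  qed
  have \<psi>0: "\<psi> x \<ge> 0" if x: "x \<in> space \<pi>" and Gx: "G x \<noteq> \<infinity>" for x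
  proof -
    have m: "\<epsilon> powr (1/p) \<le> Tg x" using TgG[OF x Gx] by simp
    have mpos: "Tg x > 0" using m e0 less_le_trans[of 0 "\<epsilon> powr (1/p)"] by simp
    have "ln (\<epsilon> powr (1/p)) \<le> ln (Tg x)" using m e0 mpos by (subst ln_le_cancel_iff) auto
    then have "ln \<epsilon> / p \<le> ln (Tg x)" using e0 by (simp add: ln_powr)
    then have "ln \<epsilon> \<le> p * ln (Tg x)" using p0 by (simp add: field_simps)
    then show ?thesis unfolding \<psi>_def by simp
  qed
  have L0: "L x \<ge> 0" for x unfolding L_def using e0 \<sigma>0[of x] by simp
  have X_eq: "(\<integral>\<^sup>+x. ennreal (L x) \<partial>\<nu>) = (\<integral>\<^sup>+x. ennreal (\<sigma> x * L x) \<partial>\<pi>)"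
  proof -
    have "(\<integral>\<^sup>+x. ennreal (L x) \<partial>\<nu>) = (\<integral>\<^sup>+x. ennreal (\<sigma> x) * ennreal (L x) \<partial>\<pi>)"
      unfolding \<sigma>_def using dens_nn[OF P N acn sn, of "\<lambda>x. ennreal (L x)"] by simp
    also have "\<dots> = (\<integral>\<^sup>+x. ennreal (\<sigma> x * L x) \<partial>\<pi>)"
      using \<sigma>0 L0 by (intro nn_integral_cong) (simp add: ennreal_mult)
    finally show ?thesis .
  qed
  have C1: "A' + ennreal (- ln \<epsilon>) \<le> (\<integral>\<^sup>+x. ennreal (L x) \<partial>\<nu>) + B'"
  proof -
    have c: "(\<integral>\<^sup>+x. ennreal (\<sigma> x * (- ln \<epsilon>)) \<partial>\<pi>) = ennreal (- ln \<epsilon>)"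
    proof -
      have "(\<integral>\<^sup>+x. ennreal (\<sigma> x * (- ln \<epsilon>)) \<partial>\<pi>) = (\<integral>\<^sup>+x. ennreal (\<sigma> x) * ennreal (- ln \<epsilon>) \<partial>\<pi>)"
        using \<sigma>0 lne by (intro nn_integral_cong) (simp only: ennreal_mult)
      also have "\<dots> = ennreal (- ln \<epsilon>)" by (subst nn_integral_multc) (auto simp: sig1)
      finally show ?thesis .
    qed
    have "A' + ennreal (- ln \<epsilon>) = (\<integral>\<^sup>+x. ennreal (\<sigma> x * ln (\<sigma> x)) + ennreal (\<sigma> x * (- ln \<epsilon>)) \<partial>\<pi>)"
      unfolding A'_def c[symmetric] by (subst nn_integral_add) auto
    also have "\<dots> \<le> (\<integral>\<^sup>+x. ennreal (\<sigma> x * L x) + ennreal (- (\<sigma> x * ln (\<sigma> x))) \<partial>\<pi>)"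
    proof (intro nn_integral_mono real_pt1)
      fix x
      show "0 \<le> \<sigma> x * - ln \<epsilon>" using \<sigma>0[of x] lne by (simp add: mult_nonneg_nonpos)
      show "0 \<le> \<sigma> x * L x" using \<sigma>0[of x] L0[of x] by simp
      show "\<sigma> x * ln (\<sigma> x) + \<sigma> x * - ln \<epsilon> \<le> \<sigma> x * L x"
      proof (cases "\<sigma> x = 0")
        case False
        then have "ln (\<sigma> x) \<le> ln (\<sigma> x + \<epsilon>)" using \<sigma>0[of x] e0 by simp
        then have "\<sigma> x * ln (\<sigma> x) \<le> \<sigma> x * ln (\<sigma> x + \<epsilon>)" using \<sigma>0[of x] by (intro mult_left_mono) auto
        then show ?thesis unfolding L_def by (simp add: algebra_simps)
      qed simp
    qed
    also have "\<dots> = (\<integral>\<^sup>+x. ennreal (L x) \<partial>\<nu>) + B'"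
      unfolding X_eq B'_def by (subst nn_integral_add) auto
    finally show ?thesis .
  qed
  have C2x: "(\<integral>\<^sup>+y. ennreal (L y) \<partial>T x) \<le> ennreal (\<psi> x)"
    if x: "x \<in> space \<pi>" and Gx: "G x \<noteq> \<infinity>" for x
  proof -
    interpret Tx: prob_space "T x" using Tx[OF x] by simp
    define m where "m = Tg x"
    have m: "ennreal m = G x" "\<epsilon> powr (1/p) \<le> m" using TgG[OF x Gx] unfolding m_def by auto
    have mpos: "m > 0" using m(2) e0 less_le_trans[of 0 "\<epsilon> powr (1/p)"] by simp
    have psi0: "\<psi> x \<ge> 0" using \<psi>0[OF x Gx] .
    have pt: "ennreal (L y) + ennreal p \<le> ennreal (\<psi> x) + ennreal (p / m) * ennreal (g y)" for y
    proof -
      have z: "\<sigma> y + \<epsilon> > 0" using \<sigma>0[of y] e0 by simp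
      have lg: "ln (g y) = ln (\<sigma> y + \<epsilon>) / p" unfolding g_def using z by (simp add: ln_powr)
      have "ln (g y) \<le> ln m + g y / m - 1" using tangent_pt[OF mpos g0[of y]] .
      then have "p * ln (g y) \<le> p * (ln m + g y / m - 1)" using p0 by (intro mult_left_mono) auto
      moreover have "p * ln (g y) = ln (\<sigma> y + \<epsilon>)" using lg p0 by simp
      moreover have "p * (ln m + g y / m - 1) = p * ln m + p / m * g y - p" by (simp add: algebra_simps)
      ultimately have "ln (\<sigma> y + \<epsilon>) \<le> p * ln m + p / m * g y - p" by linarith
      then have r: "L y + p \<le> \<psi> x + p / m * g y"
        unfolding L_def \<psi>_def m_def by linarith
      have "ennreal (L y) + ennreal p = ennreal (L y + p)" using L0[of y] p0 by (simp add: ennreal_plus)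
      also have "\<dots> \<le> ennreal (\<psi> x + p / m * g y)" using r by (intro ennreal_leI)
      also have "\<dots> = ennreal (\<psi> x) + ennreal (p / m * g y)"
        using psi0 p0 mpos g0[of y] by (intro ennreal_plus) auto
      also have "\<dots> = ennreal (\<psi> x) + ennreal (p / m) * ennreal (g y)"
        using p0 mpos g0[of y] ennreal_mult[of "p / m" "g y"] by simp
      finally show ?thesis .
    qed
    have LTm: "(\<lambda>y. ennreal (L y)) \<in> borel_measurable (T x)" by (rule Tx_meas'[OF _ x]) measurable
    have gTm: "(\<lambda>y. ennreal (g y)) \<in> borel_measurable (T x)" by (rule Tx_meas'[OF _ x]) measurable
    have "(\<integral>\<^sup>+y. ennreal (L y) \<partial>T x) + ennreal p = (\<integral>\<^sup>+y. ennreal (L y) + ennreal p \<partial>T x)"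
      using LTm by (subst nn_integral_add) (simp_all add: Tx.emeasure_space_1)
    also have "\<dots> \<le> (\<integral>\<^sup>+y. ennreal (\<psi> x) + ennreal (p / m) * ennreal (g y) \<partial>T x)"
      using pt by (intro nn_integral_mono) simp
    also have "\<dots> = ennreal (\<psi> x) + ennreal (p / m) * G x"
      unfolding G_def using gTm by (subst nn_integral_add) (simp_all add: Tx.emeasure_space_1 nn_integral_cmult)
    also have "\<dots> = ennreal (\<psi> x) + ennreal p"
    proof -
      have "ennreal (p / m) * G x = ennreal (p / m * m)"
        unfolding m(1)[symmetric] using mpos p0 by (subst ennreal_mult) auto
      also have "p / m * m = p" using mpos by simp
      finally show ?thesis by simp
    qed
    finally have "ennreal p + (\<integral>\<^sup>+y. ennreal (L y) \<partial>T x) \<le> ennreal p + ennreal (\<psi> x)"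
      by (simp add: add.commute)
    then show ?thesis unfolding ennreal_add_left_cancel_le by simp
  qed
  have C2: "(\<integral>\<^sup>+x. ennreal (L x) \<partial>\<nu>) \<le> (\<integral>\<^sup>+x. ennreal (\<psi> x) \<partial>\<mu>)"
  proof -
    have "(\<integral>\<^sup>+x. ennreal (L x) \<partial>\<nu>) = (\<integral>\<^sup>+x. (\<integral>\<^sup>+y. ennreal (L y) \<partial>T x) \<partial>\<mu>)"
      unfolding \<nu>_def by (rule nn_integral_bind[OF _ Tm]) simp
    also have "\<dots> \<le> (\<integral>\<^sup>+x. ennreal (\<psi> x) \<partial>\<mu>)"
    proof (rule nn_integral_mono_AE)
      show "AE x in \<mu>. (\<integral>\<^sup>+y. ennreal (L y) \<partial>T x) \<le> ennreal (\<psi> x)"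
        using AE_space[of \<mu>] aeGmu
      proof eventually_elim
        case (elim x)
        then show ?case using C2x[of x] sp by blast
      qed
    qed
    finally show ?thesis .
  qed
  have Y_eq: "(\<integral>\<^sup>+x. ennreal (\<psi> x) \<partial>\<mu>) = (\<integral>\<^sup>+x. ennreal (\<rho> x) * ennreal (\<psi> x) \<partial>\<pi>)"
    unfolding \<rho>_def using dens_nn[OF P M ac s, of "\<lambda>x. ennreal (\<psi> x)"] by simp
  define E where "E = (\<integral>\<^sup>+x. ennreal (exp (\<phi> x)) \<partial>\<pi>)"
  have C3: "ennreal (q / p) * (\<integral>\<^sup>+x. ennreal (\<psi> x) \<partial>\<mu>) + B + 1 \<le> A + E + ennreal k"
  proof -
    have "ennreal (q / p) * (\<integral>\<^sup>+x. ennreal (\<psi> x) \<partial>\<mu>) + B + 1 =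
      (\<integral>\<^sup>+x. ennreal (q / p * (\<rho> x * \<psi> x)) + ennreal (- (\<rho> x * ln (\<rho> x))) + ennreal (\<rho> x) \<partial>\<pi>)"
    proof -
      have "(\<integral>\<^sup>+x. ennreal (q / p * (\<rho> x * \<psi> x)) \<partial>\<pi>) = (\<integral>\<^sup>+x. ennreal (q / p) * (ennreal (\<rho> x) * ennreal (\<psi> x)) \<partial>\<pi>)"
      proof (intro nn_integral_cong)
        fix x
        have "ennreal (q / p * (\<rho> x * \<psi> x)) = ennreal (q / p) * ennreal (\<rho> x * \<psi> x)"
          using p0 q0 by (intro ennreal_mult') simp
        also have "ennreal (\<rho> x * \<psi> x) = ennreal (\<rho> x) * ennreal (\<psi> x)"
          using \<rho>0[of x] by (intro ennreal_mult')
        finally show "ennreal (q / p * (\<rho> x * \<psi> x)) = ennreal (q / p) * (ennreal (\<rho> x) * ennreal (\<psi> x))" .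
      qed
      also have "\<dots> = ennreal (q / p) * (\<integral>\<^sup>+x. ennreal (\<psi> x) \<partial>\<mu>)"
        unfolding Y_eq by (subst nn_integral_cmult) simp_all
      finally have 1: "(\<integral>\<^sup>+x. ennreal (q / p * (\<rho> x * \<psi> x)) \<partial>\<pi>) = ennreal (q / p) * (\<integral>\<^sup>+x. ennreal (\<psi> x) \<partial>\<mu>)" .
      show ?thesis
        by (simp_all add: nn_integral_add 1[symmetric] B_def rho1[symmetric])
    qed
    also have "\<dots> \<le> (\<integral>\<^sup>+x. ennreal (\<rho> x * ln (\<rho> x)) + ennreal (exp (\<phi> x)) + ennreal (k * \<rho> x) \<partial>\<pi>)"
    proof (rule nn_integral_mono_AE)
      show "AE x in \<pi>. ennreal (q / p * (\<rho> x * \<psi> x)) + ennreal (- (\<rho> x * ln (\<rho> x))) + ennreal (\<rho> x)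
          \<le> ennreal (\<rho> x * ln (\<rho> x)) + ennreal (exp (\<phi> x)) + ennreal (k * \<rho> x)"
        using AE_space[of \<pi>] aeG
      proof eventually_elim
        case (elim x)
        have psi0: "\<psi> x \<ge> 0" using \<psi>0 elim by blast
        have eq: "q / p * (\<rho> x * \<psi> x) = \<rho> x * \<phi> x + k * \<rho> x"
          unfolding \<psi>_def \<phi>_def k_def using p0 by (simp add: field_simps)
        have "\<rho> x * \<phi> x + \<rho> x \<le> \<rho> x * ln (\<rho> x) + exp (\<phi> x)" using gibbs_pt[OF \<rho>0[of x]] .
        then have ineq: "q / p * (\<rho> x * \<psi> x) + \<rho> x \<le> \<rho> x * ln (\<rho> x) + exp (\<phi> x) + k * \<rho> x"
          unfolding eq by linarith
        show ?case
          by (rule real_pt2[OF ineq]) (use p0 q0 \<rho>0[of x] psi0 k0 in auto)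
      qed
    qed
    also have "\<dots> = A + E + ennreal k"
    proof -
      have "(\<integral>\<^sup>+x. ennreal (k * \<rho> x) \<partial>\<pi>) = ennreal k"
      proof -
        have "(\<integral>\<^sup>+x. ennreal (k * \<rho> x) \<partial>\<pi>) = (\<integral>\<^sup>+x. ennreal k * ennreal (\<rho> x) \<partial>\<pi>)"
          using k0 by (intro nn_integral_cong ennreal_mult')
        also have "\<dots> = ennreal k" by (subst nn_integral_cmult) (simp_all add: rho1)
        finally show ?thesis .
      qed
      then show ?thesis
        by (simp_all add: nn_integral_add A_def E_def)
    qed
    finally show ?thesis .
  qed
  define R where "R = (1 + \<epsilon>) powr (q / p)"
  have C4: "E \<le> ennreal R"
  proof -
    have gpow: "\<bar>g x\<bar> powr p = \<sigma> x + \<epsilon>" for x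
    proof -
      have "\<bar>g x\<bar> powr p = ((\<sigma> x + \<epsilon>) powr (1 / p)) powr p" using g0[of x] unfolding g_def by simp
      also have "\<dots> = (\<sigma> x + \<epsilon>) powr (1 / p * p)" by (simp add: powr_powr)
      also have "\<dots> = \<sigma> x + \<epsilon>" using p0 \<sigma>0[of x] e0 by simp
      finally show ?thesis .
    qed
    have gp: "(\<integral>\<^sup>+x. ennreal (\<bar>g x\<bar> powr p) \<partial>\<pi>) = ennreal (1 + \<epsilon>)"
    proof -
      have "(\<integral>\<^sup>+x. ennreal (\<bar>g x\<bar> powr p) \<partial>\<pi>) = (\<integral>\<^sup>+x. ennreal (\<sigma> x) + ennreal \<epsilon> \<partial>\<pi>)"
        unfolding gpow using \<sigma>0 e0 by (intro nn_integral_cong) (simp add: ennreal_plus)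
      also have "\<dots> = 1 + ennreal \<epsilon>" by (subst nn_integral_add) (simp_all add: sig1 emeasure_space_1)
      finally show ?thesis using e0 by (simp add: ennreal_plus)
    qed
    have "Lnorm \<pi> q Tg \<le> Lnorm \<pi> p g" unfolding Tg_def by (rule hyp[OF gm]) (simp add: gp)
    also have "Lnorm \<pi> p g = ennreal ((1 + \<epsilon>) powr (1 / p))"
      unfolding Lnorm_def Let_def gp using e0 by (simp del: ennreal_plus)
    finally have H: "Lnorm \<pi> q Tg \<le> ennreal ((1 + \<epsilon>) powr (1 / p))" .
    define I where "I = (\<integral>\<^sup>+ x. ennreal (\<bar>Tg x\<bar> powr q) \<partial>\<pi>)"
    have LI: "Lnorm \<pi> q Tg = (if I = \<infinity> then \<infinity> else ennreal (enn2real I powr (1 / q)))"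
      unfolding Lnorm_def Let_def I_def by simp
    have If: "I \<noteq> \<infinity>" using H unfolding LI by (auto split: if_splits simp: top_unique)
    then have "ennreal (enn2real I powr (1 / q)) \<le> ennreal ((1 + \<epsilon>) powr (1 / p))" using H unfolding LI by simp
    then have "enn2real I powr (1 / q) \<le> (1 + \<epsilon>) powr (1 / p)" by (subst (asm) ennreal_le_iff) auto
    then have "(enn2real I powr (1 / q)) powr q \<le> ((1 + \<epsilon>) powr (1 / p)) powr q"
      using q0 by (intro powr_mono2) auto
    also have "(enn2real I powr (1 / q)) powr q = enn2real I" using q0 by (simp add: powr_powr)
    also have "((1 + \<epsilon>) powr (1 / p)) powr q = R" unfolding R_def by (simp add: powr_powr)
    finally have IR: "enn2real I \<le> R" .
    have "E = I"
      unfolding E_def I_def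
    proof (rule nn_integral_cong_AE)
      show "AE x in \<pi>. ennreal (exp (\<phi> x)) = ennreal (\<bar>Tg x\<bar> powr q)"
        using AE_space[of \<pi>] aeG
      proof eventually_elim
        case (elim x)
        have m: "\<epsilon> powr (1/p) \<le> Tg x" using TgG elim by blast
        have mpos: "Tg x > 0" using m e0 less_le_trans[of 0 "\<epsilon> powr (1/p)"] by simp
        show ?case unfolding \<phi>_def using mpos by (simp add: powr_def)
      qed
    qed
    then have "E = ennreal (enn2real I)" using If by (simp add: less_top)
    then show ?thesis using IR by (simp add: ennreal_leI)
  qed
  define X where "X = (\<integral>\<^sup>+x. ennreal (L x) \<partial>\<nu>)"
  define Y where "Y = (\<integral>\<^sup>+x. ennreal (\<psi> x) \<partial>\<mu>)"
  have C1': "A' + ennreal (- ln \<epsilon>) \<le> X + B'" using C1 unfolding X_def .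
  have C2': "X \<le> Y" using C2 unfolding X_def Y_def .
  have C3': "ennreal (q / p) * Y + B + 1 \<le> A + E + ennreal k" using C3 unfolding Y_def .
  have Bf: "B \<noteq> \<infinity>" using neg_part_le1[OF P, of "RN_deriv \<pi> \<mu>"] unfolding B_def \<rho>_def
    using neq_top_trans[of 1] by auto
  have B'f: "B' \<noteq> \<infinity>" using neg_part_le1[OF P, of "RN_deriv \<pi> \<nu>"] unfolding B'_def \<sigma>_def
    using neq_top_trans[of 1] by auto
  have Af: "A \<noteq> \<infinity>" using Afin unfolding A_def \<rho>_def .
  have Ef: "E \<noteq> \<infinity>" using C4 neq_top_trans[of "ennreal R"] by auto
  have "A + E + ennreal k \<noteq> \<infinity>" using Af Ef by simp
  moreover have "ennreal (q / p) * Y \<le> A + E + ennreal k"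
    by (rule order_trans[OF _ C3'], rule add_increasing2, simp, rule add_increasing2, simp_all)
  ultimately have "ennreal (q / p) * Y \<noteq> \<infinity>" by (metis infinity_ennreal_def neq_top_trans)
  then have Yf: "Y \<noteq> \<infinity>" using p0 q0 by (auto simp: ennreal_mult_eq_top_iff)
  have Xf: "X \<noteq> \<infinity>" using C2' Yf by (metis infinity_ennreal_def neq_top_trans)
  have "X + B' \<noteq> \<infinity>" using Xf B'f by simp
  moreover have "A' \<le> X + B'"
    by (rule order_trans[OF _ C1'], rule add_increasing2, simp_all)
  ultimately have A'f: "A' \<noteq> \<infinity>" by (metis infinity_ennreal_def neq_top_trans)
  obtain a where a: "A = ennreal a" "0 \<le> a" using Af by (cases A rule: ennreal_cases) auto
  obtain b where b: "B = ennreal b" "0 \<le> b" using Bf by (cases B rule: ennreal_cases) auto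
  obtain a' where a': "A' = ennreal a'" "0 \<le> a'" using A'f by (cases A' rule: ennreal_cases) auto
  obtain b' where b': "B' = ennreal b'" "0 \<le> b'" using B'f by (cases B' rule: ennreal_cases) auto
  obtain x where x: "X = ennreal x" "0 \<le> x" using Xf by (cases X rule: ennreal_cases) auto
  obtain y where y: "Y = ennreal y" "0 \<le> y" using Yf by (cases Y rule: ennreal_cases) auto
  obtain e where e: "E = ennreal e" "0 \<le> e" using Ef by (cases E rule: ennreal_cases) auto
  have mlne: "0 \<le> - ln \<epsilon>" using lne by simp
  have qp: "0 \<le> q / p" using p0 q0 by simp
  have R1: "ennreal (a' + - ln \<epsilon>) \<le> ennreal (x + b')"
    using C1' a' b' x mlne by (simp only: ennreal_plus[symmetric])
  then have r1: "a' - ln \<epsilon> \<le> x + b'" using x b' by (subst (asm) ennreal_le_iff) auto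
  have r2: "x \<le> y" using C2' x y by simp
  have R3: "ennreal (q / p * y + b + 1) \<le> ennreal (a + e + k)"
  proof -
    have "ennreal (q / p * y + b + 1) = ennreal (q / p) * ennreal y + ennreal b + 1"
    proof -
      have qy: "0 \<le> q / p * y" using qp y(2) by (rule mult_nonneg_nonneg)
      have "ennreal (q / p * y + b + 1) = ennreal (q / p * y) + ennreal b + ennreal 1"
        using qy b by (simp add: ennreal_plus)
      also have "ennreal (q / p * y) = ennreal (q / p) * ennreal y" using qp by (rule ennreal_mult')
      finally show ?thesis by simp
    qed
    moreover have "ennreal (a + e + k) = ennreal a + ennreal e + ennreal k"
      using a e k0 by (simp only: ennreal_plus[symmetric])
    ultimately show ?thesis using C3' a b e y by simp
  qed
  then have r3: "q / p * y + b + 1 \<le> a + e + k" using a e k0 by (subst (asm) ennreal_le_iff) auto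
  have R0: "0 \<le> R" unfolding R_def by simp
  have r4: "e \<le> R" using C4 e R0 by simp
  have m3: "p / q * (q / p * y + b + 1) \<le> p / q * (a + e + k)"
    using r3 p0 q0 by (intro mult_left_mono) auto
  have m4: "p / q * e \<le> p / q * R" using r4 p0 q0 by (intro mult_left_mono) auto
  have eq1: "p / q * (q / p * y + b + 1) = y + p / q * b + p / q" using p0 q0 by (simp add: field_simps)
  have eq2: "p / q * (a + e + k) = p / q * a + p / q * e - ln \<epsilon>" using p0 q0 unfolding k_def by (simp add: field_simps)
  have eq3: "p / q * (a - b) + p / q * (R - 1) = p / q * a - p / q * b + p / q * R - p / q"
    by (simp only: right_diff_distrib mult_1_right)
  have fin: "a' - b' \<le> p / q * (a - b) + p / q * (R - 1)"
    using r1 r2 m3 m4 eq1 eq2 eq3 by linarith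
  have "enn2real A' = a'" "enn2real B' = b'" "enn2real A = a" "enn2real B = b"
    using a b a' b' by auto
  then show ?thesis using fin A'f
    unfolding A'_def B'_def A_def B_def \<sigma>_def \<rho>_def \<nu>_def R_def by simp
qed



theorem theorem2p1:
  fixes \<pi> :: "'a measure" and T :: "'a \<Rightarrow> 'a measure" and p q :: real
  assumes "prob_space \<pi>"
    and "T \<in> \<pi> \<rightarrow>\<^sub>M prob_algebra \<pi>"
    and "bind \<pi> T = \<pi>"
    and "1 \<le> p" and "p \<le> q"
    and "\<And>f. f \<in> borel_measurable \<pi> \<Longrightarrow> (\<integral>\<^sup>+ x. ennreal (\<bar>f x\<bar> powr p) \<partial>\<pi>) < \<infinity> \<Longrightarrow>
           Lnorm \<pi> q (kernel_fun T f) \<le> Lnorm \<pi> p f"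
  shows "\<And>\<mu>. prob_space \<mu> \<Longrightarrow> sets \<mu> = sets \<pi> \<Longrightarrow>
           KL (bind \<mu> T) \<pi> \<le> ereal (p / q) * KL \<mu> \<pi>"
proof -
  fix \<mu> :: "'a measure"
  assume M: "prob_space \<mu>" and s: "sets \<mu> = sets \<pi>"
  have p0: "p > 0" and q0: "q > 0" using assms(4,5) by auto
  have pq0: "p / q > 0" using p0 q0 by simp
  show "KL (bind \<mu> T) \<pi> \<le> ereal (p / q) * KL \<mu> \<pi>"
  proof (cases "KL \<mu> \<pi> = \<infinity>")
    case True
    then show ?thesis using p0 q0 by simp
  next
    case False
    then have ac: "absolutely_continuous \<pi> \<mu>" using s unfolding KL_def by (auto split: if_splits)
    define A where "A = (\<integral>\<^sup>+ x. ennreal (enn2real (RN_deriv \<pi> \<mu> x) * ln (enn2real (RN_deriv \<pi> \<mu> x))) \<partial>\<pi>)"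
    define B where "B = (\<integral>\<^sup>+ x. ennreal (- (enn2real (RN_deriv \<pi> \<mu> x) * ln (enn2real (RN_deriv \<pi> \<mu> x)))) \<partial>\<pi>)"
    define A' where "A' = (\<integral>\<^sup>+ x. ennreal (enn2real (RN_deriv \<pi> (bind \<mu> T) x) * ln (enn2real (RN_deriv \<pi> (bind \<mu> T) x))) \<partial>\<pi>)"
    define B' where "B' = (\<integral>\<^sup>+ x. ennreal (- (enn2real (RN_deriv \<pi> (bind \<mu> T) x) * ln (enn2real (RN_deriv \<pi> (bind \<mu> T) x)))) \<partial>\<pi>)"
    have KLmu: "KL \<mu> \<pi> = enn2ereal A - enn2ereal B" unfolding A_def B_def using KL_eq[OF ac s] .
    note bac = bind_ac[OF assms(1,2,3) M s ac]
    have KLnu: "KL (bind \<mu> T) \<pi> = enn2ereal A' - enn2ereal B'" unfolding A'_def B'_def using KL_eq[OF bac(1,2)] .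
    have Bf: "B \<noteq> \<infinity>" using neg_part_le1[OF assms(1), of "RN_deriv \<pi> \<mu>"] unfolding B_def
      using neq_top_trans[of 1] by auto
    have B'f: "B' \<noteq> \<infinity>" using neg_part_le1[OF assms(1), of "RN_deriv \<pi> (bind \<mu> T)"] unfolding B'_def
      using neq_top_trans[of 1] by auto
    have Af: "A \<noteq> \<infinity>"
    proof
      assume "A = \<infinity>"
      then have "KL \<mu> \<pi> = \<infinity>" using KLmu Bf by (simp add: less_top)
      then show False using False by simp
    qed
    have core': "A' \<noteq> \<infinity> \<and> enn2real A' - enn2real B' \<le> (p / q) * (enn2real A - enn2real B) + (p / q) * ((1 + \<epsilon>) powr (q / p) - 1)"
      if "0 < \<epsilon>" "\<epsilon> \<le> 1" for \<epsilon>
      using core[OF assms(1-6) M s ac that Af[unfolded A_def]] unfolding A_def B_def A'_def B'_def .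
    have A'f: "A' \<noteq> \<infinity>" using core'[of 1] by simp
    have lim: "((\<lambda>\<epsilon>. (p / q) * (enn2real A - enn2real B) + (p / q) * ((1 + \<epsilon>) powr (q / p) - 1)) \<longlongrightarrow>
        (p / q) * (enn2real A - enn2real B) + (p / q) * ((1 + 0) powr (q / p) - 1)) (at_right 0)"
      by (intro tendsto_intros) auto
    have ev: "eventually (\<lambda>\<epsilon>. enn2real A' - enn2real B' \<le> (p / q) * (enn2real A - enn2real B) + (p / q) * ((1 + \<epsilon>) powr (q / p) - 1)) (at_right (0::real))"
    proof -
      have e01: "eventually (\<lambda>x. x \<in> {0<..<(1::real)}) (at_right 0)" by (rule eventually_at_right_real) simp
      then show ?thesis by (rule eventually_mono) (use core' in auto)
    qed
    have le: "enn2real A' - enn2real B' \<le> (p / q) * (enn2real A - enn2real B)"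
      using tendsto_le[OF trivial_limit_at_right_real lim tendsto_const ev] by simp
    have conv: "enn2ereal Z = ereal (enn2real Z)" if "Z \<noteq> \<infinity>" for Z :: ennreal
    proof -
      have "Z = ennreal (enn2real Z)" using that by (simp add: less_top)
      then have "enn2ereal Z = enn2ereal (ennreal (enn2real Z))" by simp
      also have "\<dots> = ereal (enn2real Z)" by simp
      finally show ?thesis .
    qed
    have "KL (bind \<mu> T) \<pi> = ereal (enn2real A' - enn2real B')"
      unfolding KLnu using conv[OF A'f] conv[OF B'f] by simp
    moreover have "KL \<mu> \<pi> = ereal (enn2real A - enn2real B)"
      unfolding KLmu using conv[OF Af] conv[OF Bf] by simp
    ultimately show ?thesis using le by simp
  qed
qed

end
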